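(* Let $n>3$. Let $\mu_{1,1}^n$ be the complex commutative associative algebra with basis $e_1,\dots,e_n$ and only nonzero products $e_i\cdot e_j=e_{i+j}$ for $2\le i+j\le n-1$, and let $\mu_{1,2}^n$ be the one with only nonzero products $e_i\cdot e_j=e_{i+j}$ for $2\le i+j\le n-1$ and $e_n\cdot e_n=e_{n-1}$. Then: (1) if $(\mathcal{P},\cdot)=\mu_{1,1}^n$, then $Z^{2}(\mathcal{P},\mathcal{P})=\{\alpha\Delta_{1,n}(-,-)e_{n-1}+\beta\Delta_{1,n}(-,-)e_n:\alpha,\beta\in\mathbb{C}\}$; (2) if $(\mathcal{P},\cdot)=\mu_{1,2}^n$, then $Z^{2}(\mathcal{P},\mathcal{P})=\{\alpha\Delta_{1,n}(-,-)e_{n-1}:\alpha\in\mathbb{C}\}$.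
   Context: For a commutative associative algebra $(\mathcal{P},\cdot)$, $Z^{2}(\mathcal{P},\mathcal{P})$ is the set of all skew-symmetric bilinear maps $\theta:\mathcal{P}\times\mathcal{P}\to\mathcal{P}$ such that $\theta(\theta(x,y),z)+\theta(\theta(y,z),x)+\theta(\theta(z,x),y)=0$ and $\theta(x\cdot y,z)-\theta(x,z)\cdot y-x\cdot\theta(y,z)=0$ for all $x,y,z$. $\Delta_{1,n}$ denotes the skew-symmetric bilinear form with $\Delta_{1,n}(e_1,e_n)=1$, $\Delta_{1,n}(e_n,e_1)=-1$, and $\Delta_{1,n}(e_l,e_m)=0$ for all other pairs of basis vectors. *)

theory Defs
  imports Complex_Main
begin

text \<open>Vectors of the n-dimensional complex space with basis e_1,...,e_n are
  modelled as coordinate functions nat => complex supported on {1..n}.\<close>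

definition vecs :: "nat \<Rightarrow> (nat \<Rightarrow> complex) set" where
  "vecs n = {v. \<forall>i. i \<notin> {1..n} \<longrightarrow> v i = 0}"

definition bvec :: "nat \<Rightarrow> nat \<Rightarrow> complex" where
  "bvec i = (\<lambda>k. if k = i then 1 else 0)"

definition vadd :: "(nat \<Rightarrow> complex) \<Rightarrow> (nat \<Rightarrow> complex) \<Rightarrow> nat \<Rightarrow> complex" where
  "vadd x y = (\<lambda>k. x k + y k)"

definition vscale :: "complex \<Rightarrow> (nat \<Rightarrow> complex) \<Rightarrow> nat \<Rightarrow> complex" where
  "vscale a x = (\<lambda>k. a * x k)"

text \<open>An algebra structure given by the products of basis vectors
  m i j = e_i * e_j, extended bilinearly.\<close>

definition amult :: "(nat \<Rightarrow> nat \<Rightarrow> nat \<Rightarrow> complex) \<Rightarrow> nat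
    \<Rightarrow> (nat \<Rightarrow> complex) \<Rightarrow> (nat \<Rightarrow> complex) \<Rightarrow> nat \<Rightarrow> complex" where
  "amult m n x y = (\<lambda>k. \<Sum>i\<in>{1..n}. \<Sum>j\<in>{1..n}. x i * y j * m i j k)"

definition mu11 :: "nat \<Rightarrow> nat \<Rightarrow> nat \<Rightarrow> nat \<Rightarrow> complex" where
  "mu11 n i j = (if 2 \<le> i + j \<and> i + j \<le> n - 1 then bvec (i + j) else (\<lambda>k. 0))"

definition mu12 :: "nat \<Rightarrow> nat \<Rightarrow> nat \<Rightarrow> nat \<Rightarrow> complex" where
  "mu12 n i j = (if 2 \<le> i + j \<and> i + j \<le> n - 1 then bvec (i + j)
                 else if i = n \<and> j = n then bvec (n - 1) else (\<lambda>k. 0))"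

definition bilinear_on_vecs :: "nat \<Rightarrow> ((nat \<Rightarrow> complex) \<Rightarrow> (nat \<Rightarrow> complex) \<Rightarrow> nat \<Rightarrow> complex) \<Rightarrow> bool" where
  "bilinear_on_vecs n \<theta> \<longleftrightarrow>
     (\<forall>x\<in>vecs n. \<forall>y\<in>vecs n. \<theta> x y \<in> vecs n) \<and>
     (\<forall>a b. \<forall>x\<in>vecs n. \<forall>x'\<in>vecs n. \<forall>y\<in>vecs n.
        \<theta> (vadd (vscale a x) (vscale b x')) y = vadd (vscale a (\<theta> x y)) (vscale b (\<theta> x' y))) \<and>
     (\<forall>a b. \<forall>x\<in>vecs n. \<forall>y\<in>vecs n. \<forall>y'\<in>vecs n.
        \<theta> x (vadd (vscale a y) (vscale b y')) = vadd (vscale a (\<theta> x y)) (vscale b (\<theta> x y')))"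

text \<open>Z^2(P,P) for the algebra P = (span{e_1..e_n}, amult m n). Maps are only
  constrained on vecs n (their values outside are irrelevant).\<close>
definition Z2 :: "(nat \<Rightarrow> nat \<Rightarrow> nat \<Rightarrow> complex) \<Rightarrow> nat
    \<Rightarrow> ((nat \<Rightarrow> complex) \<Rightarrow> (nat \<Rightarrow> complex) \<Rightarrow> nat \<Rightarrow> complex) set" where
  "Z2 m n = {\<theta>. bilinear_on_vecs n \<theta> \<and>
     (\<forall>x\<in>vecs n. \<forall>y\<in>vecs n. \<theta> x y = vscale (-1) (\<theta> y x)) \<and>
     (\<forall>x\<in>vecs n. \<forall>y\<in>vecs n. \<forall>z\<in>vecs n.
        vadd (vadd (\<theta> (\<theta> x y) z) (\<theta> (\<theta> y z) x)) (\<theta> (\<theta> z x) y) = (\<lambda>k. 0)) \<and>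
     (\<forall>x\<in>vecs n. \<forall>y\<in>vecs n. \<forall>z\<in>vecs n.
        \<theta> (amult m n x y) z = vadd (amult m n (\<theta> x z) y) (amult m n x (\<theta> y z)))}"

definition Delta1n :: "nat \<Rightarrow> (nat \<Rightarrow> complex) \<Rightarrow> (nat \<Rightarrow> complex) \<Rightarrow> complex" where
  "Delta1n n x y = x 1 * y n - x n * y 1"

end

theory Submission imports Defs begin
lemma amult_bvec_left: assumes "i \<in> {1..n}" shows "amult m n (bvec i) w = (\<lambda>k. \<Sum>j\<in>{1..n}. w j * m i j k)"
proof
  fix k
  have "amult m n (bvec i) w k = (\<Sum>ia\<in>{1..n}. if ia = i then (\<Sum>j\<in>{1..n}. w j * m i j k) else 0)"
    unfolding amult_def by (rule sum.cong) (auto simp: bvec_def)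
  also have "\<dots> = (\<Sum>j\<in>{1..n}. w j * m i j k)" using assms by (simp add: sum.delta)
  finally show "amult m n (bvec i) w k = (\<Sum>j\<in>{1..n}. w j * m i j k)" .
qed
lemma amult_bvec_right: assumes "j \<in> {1..n}" shows "amult m n w (bvec j) = (\<lambda>k. \<Sum>i\<in>{1..n}. w i * m i j k)"
proof
  fix k
  have "amult m n w (bvec j) k = (\<Sum>i\<in>{1..n}. w i * m i j k)"
    unfolding amult_def
  proof (rule sum.cong)
    fix i assume "i \<in> {1..n}"
    have "(\<Sum>ja\<in>{1..n}. w i * bvec j ja * m i ja k) = (\<Sum>ja\<in>{1..n}. if ja = j then w i * m i j k else 0)"
      by (rule sum.cong) (auto simp: bvec_def)
    also have "\<dots> = w i * m i j k" using assms by (simp add: sum.delta)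
    finally show "(\<Sum>ja\<in>{1..n}. w i * bvec j ja * m i ja k) = w i * m i j k" .
  qed simp
  then show "amult m n w (bvec j) k = (\<Sum>i\<in>{1..n}. w i * m i j k)" .
qed
lemma amult_bvec_bvec: "i \<in> {1..n} \<Longrightarrow> j \<in> {1..n} \<Longrightarrow> amult m n (bvec i) (bvec j) = m i j"
proof -
  assume a: "i \<in> {1..n}" "j \<in> {1..n}"
  show ?thesis unfolding amult_bvec_left[OF a(1)]
  proof
    fix k
    have "(\<Sum>ja\<in>{1..n}. bvec j ja * m i ja k) = (\<Sum>ja\<in>{1..n}. if ja = j then m i j k else 0)"
      by (rule sum.cong) (auto simp: bvec_def)
    then show "(\<Sum>ja\<in>{1..n}. bvec j ja * m i ja k) = m i j k" using a by (simp add: sum.delta)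
  qed
qed
lemma dsum: assumes "(1::nat) \<noteq> n" "1 \<le> n" shows "(\<Sum>i\<in>{1..n}. \<Sum>j\<in>{1..n}. x i * y j * (if i = 1 \<and> j = n then c else if i = n \<and> j = 1 then - c else 0)) = x 1 * y n * c - x n * y 1 * (c::complex)"
proof -
  have "(\<Sum>i\<in>{1..n}. \<Sum>j\<in>{1..n}. x i * y j * (if i = 1 \<and> j = n then c else if i = n \<and> j = 1 then - c else 0))
    = (\<Sum>i\<in>{1..n}. (if i = 1 then x 1 * y n * c else 0) + (if i = n then - (x n * y 1 * c) else 0))"
  proof (rule sum.cong)
    fix i assume "i \<in> {1..n}"
    have "(\<Sum>j\<in>{1..n}. x i * y j * (if i = 1 \<and> j = n then c else if i = n \<and> j = 1 then - c else 0))
      = (\<Sum>j\<in>{1..n}. (if j = n then (if i = 1 then x 1 * y n * c else 0) else 0) + (if j = 1 then (if i = n then - (x n * y 1 * c) else 0) else 0))"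
      by (rule sum.cong) (use assms in auto)
    also have "\<dots> = (if i = 1 then x 1 * y n * c else 0) + (if i = n then - (x n * y 1 * c) else 0)"
      using assms by (simp only: sum.distrib sum.delta) simp
    finally show "(\<Sum>j\<in>{1..n}. x i * y j * (if i = 1 \<and> j = n then c else if i = n \<and> j = 1 then - c else 0)) = (if i = 1 then x 1 * y n * c else 0) + (if i = n then - (x n * y 1 * c) else 0)" .
  qed simp
  also have "\<dots> = x 1 * y n * c - x n * y 1 * c" using assms by (simp only: sum.distrib sum.delta) simp
  finally show ?thesis .
qed

definition lin_on :: "nat \<Rightarrow> ((nat \<Rightarrow> complex) \<Rightarrow> nat \<Rightarrow> complex) \<Rightarrow> bool" where
 "lin_on n F \<longleftrightarrow> (\<forall>a b. \<forall>x\<in>vecs n. \<forall>x'\<in>vecs n. F (vadd (vscale a x) (vscale b x')) = vadd (vscale a (F x)) (vscale b (F x')))"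

lemma vecs_lin: "x \<in> vecs n \<Longrightarrow> y \<in> vecs n \<Longrightarrow> vadd (vscale a x) (vscale b y) \<in> vecs n"
  by (simp add: vecs_def vadd_def vscale_def)
lemma zero_vecs: "(\<lambda>k. 0) \<in> vecs n" by (simp add: vecs_def)
lemma bvec_vecs: "i \<in> {1..n} \<Longrightarrow> bvec i \<in> vecs n" by (auto simp: vecs_def bvec_def)

lemma lin_zero: assumes "lin_on n F" shows "F (\<lambda>k. 0) = (\<lambda>k. 0)"
proof -
  have "F (vadd (vscale 0 (\<lambda>k. 0)) (vscale 0 (\<lambda>k. 0))) = vadd (vscale 0 (F (\<lambda>k. 0))) (vscale 0 (F (\<lambda>k. 0)))"
    using assms zero_vecs unfolding lin_on_def by blast
  moreover have "vadd (vscale 0 (\<lambda>k. 0)) (vscale 0 (\<lambda>k. 0)) = (\<lambda>k. (0::complex))" by (simp add: vadd_def vscale_def)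
  ultimately show ?thesis by (simp add: vadd_def vscale_def)
qed

lemma lin_expand_aux:
  assumes "lin_on n F" "x \<in> vecs n" "finite S" "S \<subseteq> {1..n}"
  shows "F (\<lambda>k. if k \<in> S then x k else 0) = (\<lambda>k. \<Sum>i\<in>S. x i * F (bvec i) k)"
  using assms(3,4)
proof (induction S rule: finite_induct)
  case empty then show ?case using lin_zero[OF assms(1)] by simp
next
  case (insert a S)
  let ?p = "\<lambda>k. if k \<in> S then x k else 0"
  have pv: "?p \<in> vecs n" using assms(2) by (auto simp: vecs_def)
  have bv: "bvec a \<in> vecs n" using insert by (auto intro: bvec_vecs)
  have eq: "(\<lambda>k. if k \<in> insert a S then x k else 0) = vadd (vscale 1 ?p) (vscale (x a) (bvec a))"
    using insert by (auto simp: vadd_def vscale_def bvec_def)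
  have "F (vadd (vscale 1 ?p) (vscale (x a) (bvec a))) = vadd (vscale 1 (F ?p)) (vscale (x a) (F (bvec a)))"
    using assms(1) pv bv unfolding lin_on_def by blast
  then show ?case using insert eq by (simp add: vadd_def vscale_def add.commute)
qed

lemma lin_expand: assumes "lin_on n F" "x \<in> vecs n" shows "F x = (\<lambda>k. \<Sum>i\<in>{1..n}. x i * F (bvec i) k)"
proof -
  have "(\<lambda>k. if k \<in> {1..n} then x k else 0) = x" using assms(2) by (auto simp: vecs_def)
  then show ?thesis using lin_expand_aux[OF assms(1,2), of "{1..n}"] by simp
qed

lemma bil_expand: assumes "bilinear_on_vecs n \<theta>" "x \<in> vecs n" "y \<in> vecs n"
  shows "\<theta> x y = (\<lambda>k. \<Sum>i\<in>{1..n}. \<Sum>j\<in>{1..n}. x i * y j * \<theta> (bvec i) (bvec j) k)"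
proof -
  have l1: "lin_on n (\<lambda>x. \<theta> x y)" using assms(1,3) unfolding bilinear_on_vecs_def lin_on_def by blast
  have l2: "lin_on n (\<theta> (bvec i))" if "i \<in> {1..n}" for i
    using assms(1) bvec_vecs[OF that] unfolding bilinear_on_vecs_def lin_on_def by blast
  have "\<theta> x y = (\<lambda>k. \<Sum>i\<in>{1..n}. x i * \<theta> (bvec i) y k)" using lin_expand[OF l1 assms(2)] .
  also have "\<dots> = (\<lambda>k. \<Sum>i\<in>{1..n}. x i * (\<Sum>j\<in>{1..n}. y j * \<theta> (bvec i) (bvec j) k))"
  proof
    fix k show "(\<Sum>i\<in>{1..n}. x i * \<theta> (bvec i) y k) = (\<Sum>i\<in>{1..n}. x i * (\<Sum>j\<in>{1..n}. y j * \<theta> (bvec i) (bvec j) k))"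
      by (rule sum.cong) (simp_all add: lin_expand[OF l2 assms(3)])
  qed
  finally show ?thesis by (simp add: sum_distrib_left mult.assoc mult.left_commute)
qed

lemma amult_annL: "\<forall>i\<in>{1..n}. \<forall>j\<in>{1..n}. v i = 0 \<or> m i j = (\<lambda>k. 0) \<Longrightarrow> amult m n v w = (\<lambda>k. 0)"
  unfolding amult_def
  apply (rule ext) apply (rule sum.neutral) apply (rule ballI) apply (rule sum.neutral) by force

lemma amult_annR: "\<forall>i\<in>{1..n}. \<forall>j\<in>{1..n}. v j = 0 \<or> m i j = (\<lambda>k. 0) \<Longrightarrow> amult m n w v = (\<lambda>k. 0)"
  unfolding amult_def
  apply (rule ext) apply (rule sum.neutral) apply (rule ballI) apply (rule sum.neutral) by force

lemma amult_zeroL: "amult m n (\<lambda>k. 0) w = (\<lambda>k. 0)" by (simp add: amult_def)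
lemma amult_zeroR: "amult m n w (\<lambda>k. 0) = (\<lambda>k. 0)" by (simp add: amult_def)

lemma ann_cond:
  fixes n :: nat
  assumes n3: "n > 3"
  and H2: "\<And>i j. i \<le> n \<Longrightarrow> j \<le> n \<Longrightarrow> n \<le> i + j \<Longrightarrow> \<not> (i = n \<and> j = n) \<Longrightarrow> m i j = (\<lambda>k. 0)"
  and cs: "\<forall>k. k \<noteq> n-1 \<and> k \<noteq> n \<longrightarrow> c k = 0"
  and cn: "c n = 0 \<or> m n n = (\<lambda>k. 0)"
  shows "\<forall>i\<in>{1..n}. \<forall>j\<in>{1..n}. c i = 0 \<or> m i j = (\<lambda>k. 0)"
    and "\<forall>i\<in>{1..n}. \<forall>j\<in>{1..n}. c j = 0 \<or> m i j = (\<lambda>k. 0)"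
proof -
  have *: "c i = 0 \<or> m i j = (\<lambda>k. 0)" if "i \<in> {1..n}" "j \<in> {1..n}" for i j
  proof -
    consider "i \<noteq> n-1 \<and> i \<noteq> n" | "i = n-1" | "i = n \<and> j \<noteq> n" | "i = n \<and> j = n" by blast
    then show ?thesis
    proof cases
      case 1 then show ?thesis using cs by blast
    next
      case 2 then show ?thesis using that n3 by (intro disjI2 H2) auto
    next
      case 3 then show ?thesis using that n3 by (intro disjI2 H2) auto
    next
      case 4 then show ?thesis using cn by blast
    qed
  qed
  have **: "c j = 0 \<or> m i j = (\<lambda>k. 0)" if "i \<in> {1..n}" "j \<in> {1..n}" for i j
  proof -
    consider "j \<noteq> n-1 \<and> j \<noteq> n" | "j = n-1" | "j = n \<and> i \<noteq> n" | "i = n \<and> j = n" by blast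
    then show ?thesis
    proof cases
      case 1 then show ?thesis using cs by blast
    next
      case 2 then show ?thesis using that n3 by (intro disjI2 H2) auto
    next
      case 3 then show ?thesis using that n3 by (intro disjI2 H2) auto
    next
      case 4 then show ?thesis using cn by blast
    qed
  qed
  show "\<forall>i\<in>{1..n}. \<forall>j\<in>{1..n}. c i = 0 \<or> m i j = (\<lambda>k. 0)" using * by blast
  show "\<forall>i\<in>{1..n}. \<forall>j\<in>{1..n}. c j = 0 \<or> m i j = (\<lambda>k. 0)" using ** by blast
qed

lemma ann_scale:
  fixes n :: nat
  assumes "\<forall>k. k \<noteq> n-1 \<and> k \<noteq> n \<longrightarrow> c k = 0" "c n = 0 \<or> m n n = (\<lambda>k. 0)"
  shows "\<forall>k. k \<noteq> n-1 \<and> k \<noteq> n \<longrightarrow> vscale a c k = 0" "vscale a c n = 0 \<or> m n n = (\<lambda>k. 0)"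
  using assms by (auto simp: vscale_def)


lemma forward:
  fixes n :: nat
  assumes n3: "n > 3"
  and H1: "\<And>i j. 1 \<le> i \<Longrightarrow> 1 \<le> j \<Longrightarrow> i + j \<le> n - 1 \<Longrightarrow> m i j = bvec (i+j)"
  and H2: "\<And>i j. i \<le> n \<Longrightarrow> j \<le> n \<Longrightarrow> n \<le> i + j \<Longrightarrow> \<not> (i = n \<and> j = n) \<Longrightarrow> m i j = (\<lambda>k. 0)"
  and H3: "m n n = (\<lambda>k. 0) \<or> m n n = bvec (n-1)"
  and th: "\<theta> \<in> Z2 m n"
  shows "\<exists>c. (\<forall>x\<in>vecs n. \<forall>y\<in>vecs n. \<theta> x y = vscale (Delta1n n x y) c)
           \<and> (\<forall>k. k \<noteq> n-1 \<and> k \<noteq> n \<longrightarrow> c k = 0) \<and> (c n = 0 \<or> m n n = (\<lambda>k. 0))"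
proof -
  have bil: "bilinear_on_vecs n \<theta>"
    and skew: "\<forall>x\<in>vecs n. \<forall>y\<in>vecs n. \<theta> x y = vscale (-1) (\<theta> y x)"
    and leib: "\<forall>x\<in>vecs n. \<forall>y\<in>vecs n. \<forall>z\<in>vecs n.
        \<theta> (amult m n x y) z = vadd (amult m n (\<theta> x z) y) (amult m n x (\<theta> y z))"
    using th unfolding Z2_def by blast+
  define T where "T i j = \<theta> (bvec i) (bvec j)" for i j
  have Tv: "T i j \<in> vecs n" if "i \<in> {1..n}" "j \<in> {1..n}" for i j
    using bil bvec_vecs[OF that(1)] bvec_vecs[OF that(2)] unfolding bilinear_on_vecs_def T_def by blast
  have sk: "T i j k = - T j i k" if "i \<in> {1..n}" "j \<in> {1..n}" for i j k
    using skew bvec_vecs[OF that(1)] bvec_vecs[OF that(2)] unfolding T_def vscale_def by (metis mult_minus1)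
  have lz: "\<theta> (\<lambda>k. 0) y = (\<lambda>k. 0)" if "y \<in> vecs n" for y
  proof -
    have "lin_on n (\<lambda>x. \<theta> x y)" using bil that unfolding bilinear_on_vecs_def lin_on_def by blast
    from lin_zero[OF this] show ?thesis .
  qed
  have lb: "\<theta> (m i j) (bvec l) = vadd (amult m n (T i l) (bvec j)) (amult m n (bvec i) (T j l))"
    if "i \<in> {1..n}" "j \<in> {1..n}" "l \<in> {1..n}" for i j l
    using leib bvec_vecs[OF that(1)] bvec_vecs[OF that(2)] bvec_vecs[OF that(3)] amult_bvec_bvec[OF that(1,2)]
    unfolding T_def by metis
  have lb2: "T (i+j) l = vadd (amult m n (T i l) (bvec j)) (amult m n (bvec i) (T j l))"
    if "1 \<le> i" "1 \<le> j" "i + j \<le> n - 1" "l \<in> {1..n}" for i j l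
    using lb[of i j l] H1[OF that(1-3)] that unfolding T_def by auto
  have vz: "vadd (\<lambda>k. 0) (\<lambda>k. 0) = (\<lambda>k. (0::complex))" by (simp add: vadd_def)
  have A: "T 1 1 = (\<lambda>k. 0)"
  proof
    fix k have "T 1 1 k = - T 1 1 k" using sk[of 1 1 k] n3 by auto
    then show "T 1 1 k = 0" by simp
  qed
  have B: "1 \<le> i \<longrightarrow> i \<le> n-1 \<longrightarrow> T i 1 = (\<lambda>k. 0)" for i
  proof (induction i)
    case 0 then show ?case by simp
  next
    case (Suc i)
    show ?case
    proof (cases "i = 0")
      case True then show ?thesis using A by simp
    next
      case False
      then show ?thesis using Suc lb2[of 1 i 1] A n3 by (simp add: amult_zeroL amult_zeroR vz)
    qed
  qed
  have C1: "T 1 j = (\<lambda>k. 0)" if "1 \<le> j" "j \<le> n-1" for j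
  proof
    fix k show "T 1 j k = 0" using sk[of 1 j k] B[of j] that n3 by auto
  qed
  have C: "1 \<le> i \<longrightarrow> i \<le> n-1 \<longrightarrow> T i j = (\<lambda>k. 0)" if "1 \<le> j" "j \<le> n-1" for i j
  proof (induction i)
    case 0 then show ?case by simp
  next
    case (Suc i)
    show ?case
    proof (cases "i = 0")
      case True then show ?thesis using C1 that by simp
    next
      case False
      then show ?thesis using Suc lb2[of 1 i j] C1[OF that] that n3 by (simp add: amult_zeroL amult_zeroR vz)
    qed
  qed
  define v where "v = T n 1"
  have n1: "n \<in> {1..n}" "1 \<in> {1..n}" "n - 1 \<in> {1..n}" using n3 by auto
  have vv: "v \<in> vecs n" unfolding v_def using Tv n1 by blast
  have "\<theta> (m n 1) (bvec 1) = vadd (amult m n v (bvec 1)) (amult m n (bvec n) (T 1 1))"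
    using lb[of n 1 1] n1 unfolding v_def by blast
  moreover have "m n 1 = (\<lambda>k. 0)" using H2[of n 1] n3 by simp
  ultimately have av: "amult m n v (bvec 1) = (\<lambda>k. 0)"
    using lz[OF bvec_vecs[OF n1(2)]] A by (simp add: amult_zeroR vadd_def)
  have D1: "v k = 0" if "1 \<le> k" "k \<le> n - 2" for k
  proof -
    have "amult m n v (bvec 1) (k+1) = (\<Sum>i\<in>{1..n}. v i * m i 1 (k+1))"
      using amult_bvec_right[OF n1(2)] by simp
    also have "\<dots> = (\<Sum>i\<in>{1..n}. if i = k then v k else 0)"
    proof (rule sum.cong)
      fix i assume i: "i \<in> {1..n}"
      show "v i * m i 1 (k+1) = (if i = k then v k else 0)"
      proof (cases "i + 1 \<le> n - 1")
        case True then show ?thesis using H1[of i 1] i by (auto simp: bvec_def)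
      next
        case False then show ?thesis using H2[of i 1] i that n3 by auto
      qed
    qed simp
    also have "\<dots> = v k" using that by (auto simp: sum.delta)
    finally show ?thesis using av by simp
  qed
  have D2: "v n = 0" if "m n n \<noteq> (\<lambda>k. 0)"
  proof -
    have mnn: "m n n = bvec (n-1)" using H3 that by blast
    have "\<theta> (m n n) (bvec 1) = vadd (amult m n v (bvec n)) (amult m n (bvec n) v)"
      using lb[of n n 1] n1 unfolding v_def by blast
    moreover have "\<theta> (m n n) (bvec 1) = (\<lambda>k. 0)" using mnn B[of "n-1"] n3 unfolding T_def by simp
    ultimately have e: "amult m n v (bvec n) (n-1) + amult m n (bvec n) v (n-1) = 0"
      unfolding vadd_def by metis
    have "amult m n v (bvec n) (n-1) = (\<Sum>i\<in>{1..n}. v i * m i n (n-1))"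
      using amult_bvec_right[OF n1(1)] by simp
    also have "\<dots> = (\<Sum>i\<in>{1..n}. if i = n then v n else 0)"
    proof (rule sum.cong)
      fix i assume i: "i \<in> {1..n}"
      show "v i * m i n (n-1) = (if i = n then v n else 0)"
        using H2[of i n] i mnn by (auto simp: bvec_def)
    qed simp
    also have "\<dots> = v n" using n3 by (simp add: sum.delta)
    finally have e1: "amult m n v (bvec n) (n-1) = v n" .
    have "amult m n (bvec n) v (n-1) = (\<Sum>j\<in>{1..n}. v j * m n j (n-1))"
      using amult_bvec_left[OF n1(1)] by simp
    also have "\<dots> = (\<Sum>j\<in>{1..n}. if j = n then v n else 0)"
    proof (rule sum.cong)
      fix j assume j: "j \<in> {1..n}"
      show "v j * m n j (n-1) = (if j = n then v n else 0)"
        using H2[of n j] j mnn by (auto simp: bvec_def)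
    qed simp
    also have "\<dots> = v n" using n3 by (simp add: sum.delta)
    finally have "amult m n (bvec n) v (n-1) = v n" .
    with e e1 show ?thesis by simp
  qed
  define c where "c = T 1 n"
  have cv: "c k = - v k" for k
  proof (cases "k \<in> {1..n}")
    case True
    show ?thesis unfolding c_def v_def using sk n1 by blast
  next
    case False
    then have "c k = 0" "v k = 0" using Tv n1 unfolding c_def v_def vecs_def by blast+
    then show ?thesis by simp
  qed
  have cs: "\<forall>k. k \<noteq> n-1 \<and> k \<noteq> n \<longrightarrow> c k = 0"
  proof (intro allI impI)
    fix k assume k: "k \<noteq> n-1 \<and> k \<noteq> n"
    show "c k = 0"
    proof (cases "1 \<le> k \<and> k \<le> n - 2")
      case True then show ?thesis using D1 cv by simp
    next
      case False
      then have "k \<notin> {1..n}" using k by auto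
      then show ?thesis using Tv n1 unfolding c_def vecs_def by blast
    qed
  qed
  have cn: "c n = 0 \<or> m n n = (\<lambda>k. 0)" using D2 cv by auto
  note ann = ann_cond[where m=m, OF n3 H2 cs cn]
  have E: "1 \<le> i \<longrightarrow> i + 1 \<le> n - 1 \<longrightarrow> T (i+1) n = (\<lambda>k. 0)" for i
  proof (induction i)
    case 0 then show ?case by simp
  next
    case (Suc i)
    show ?case
    proof (intro impI)
      assume h: "1 \<le> Suc i" "Suc i + 1 \<le> n - 1"
      have "amult m n (bvec 1) (T (Suc i) n) = (\<lambda>k. 0)"
      proof (cases "i = 0")
        case True then show ?thesis using amult_annR[OF ann(2)] c_def by simp
      next
        case False
        then have "T (Suc i) n = (\<lambda>k. 0)" using Suc h by simp
        then show ?thesis using amult_zeroR by simp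
      qed
      then show "T (Suc i + 1) n = (\<lambda>k. 0)" using lb2[of 1 "Suc i" n] amult_annL[OF ann(1)] n1 h unfolding c_def
        by (auto simp: vz)
    qed
  qed
  have Tform: "T i j k = (if i = 1 \<and> j = n then c k else if i = n \<and> j = 1 then - c k else 0)"
    if ij: "i \<in> {1..n}" "j \<in> {1..n}" for i j k
  proof -
    consider "i \<le> n-1 \<and> j \<le> n-1" | "i = 1 \<and> j = n" | "2 \<le> i \<and> i \<le> n-1 \<and> j = n"
      | "i = n \<and> j = 1" | "i = n \<and> 2 \<le> j \<and> j \<le> n-1" | "i = n \<and> j = n"
    proof -
      have "(i \<le> n-1 \<and> j \<le> n-1) \<or> (i = 1 \<and> j = n) \<or> (2 \<le> i \<and> i \<le> n-1 \<and> j = n)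
        \<or> (i = n \<and> j = 1) \<or> (i = n \<and> 2 \<le> j \<and> j \<le> n-1) \<or> (i = n \<and> j = n)"
        using ij n3 by auto
      then show thesis using that by blast
    qed
    then show ?thesis
    proof cases
      case 1 then show ?thesis using C[of j i] that n3 by auto
    next
      case 2 then show ?thesis unfolding c_def by simp
    next
      case 3 then show ?thesis using E[of "i-1"] n3 by auto
    next
      case 4 then show ?thesis using cv n3 unfolding v_def by auto
    next
      case 5 then show ?thesis using E[of "j-1"] sk[of i j k] that n3 by auto
    next
      case 6 then show ?thesis using sk[of n n k] n1 n3 by auto
    qed
  qed
  have "\<theta> x y = vscale (Delta1n n x y) c" if "x \<in> vecs n" "y \<in> vecs n" for x y
  proof
    fix k
    have "\<theta> x y k = (\<Sum>i\<in>{1..n}. \<Sum>j\<in>{1..n}. x i * y j * T i j k)"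
      using bil_expand[OF bil that] unfolding T_def by simp
    also have "\<dots> = (\<Sum>i\<in>{1..n}. \<Sum>j\<in>{1..n}. x i * y j * (if i = 1 \<and> j = n then c k else if i = n \<and> j = 1 then - c k else 0))"
      by (intro sum.cong refl) (simp add: Tform)
    also have "\<dots> = x 1 * y n * c k - x n * y 1 * c k" using dsum n3 by simp
    finally show "\<theta> x y k = vscale (Delta1n n x y) c k"
      by (simp add: vscale_def Delta1n_def algebra_simps)
  qed
  then show ?thesis using cs cn by blast
qed


lemma m_supp:
  fixes n :: nat
  assumes n3: "n > 3"
  and H1: "\<And>i j. 1 \<le> i \<Longrightarrow> 1 \<le> j \<Longrightarrow> i + j \<le> n - 1 \<Longrightarrow> m i j = bvec (i+j)"
  and H2: "\<And>i j. i \<le> n \<Longrightarrow> j \<le> n \<Longrightarrow> n \<le> i + j \<Longrightarrow> \<not> (i = n \<and> j = n) \<Longrightarrow> m i j = (\<lambda>k. 0)"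
  and H3: "m n n = (\<lambda>k. 0) \<or> m n n = bvec (n-1)"
  and ij: "i \<in> {1..n}" "j \<in> {1..n}"
  and k: "k \<notin> {2..n-1}"
  shows "m i j k = 0"
proof (cases "i + j \<le> n - 1")
  case True then show ?thesis using H1[of i j] ij k by (auto simp: bvec_def)
next
  case False
  show ?thesis
  proof (cases "i = n \<and> j = n")
    case True then show ?thesis using H3 k n3 by (auto simp: bvec_def)
  next
    case False2: False
    then show ?thesis using H2[of i j] ij False by auto
  qed
qed

lemma backward:
  fixes n :: nat
  assumes n3: "n > 3"
  and H1: "\<And>i j. 1 \<le> i \<Longrightarrow> 1 \<le> j \<Longrightarrow> i + j \<le> n - 1 \<Longrightarrow> m i j = bvec (i+j)"
  and H2: "\<And>i j. i \<le> n \<Longrightarrow> j \<le> n \<Longrightarrow> n \<le> i + j \<Longrightarrow> \<not> (i = n \<and> j = n) \<Longrightarrow> m i j = (\<lambda>k. 0)"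
  and H3: "m n n = (\<lambda>k. 0) \<or> m n n = bvec (n-1)"
  and cs: "\<forall>k. k \<noteq> n-1 \<and> k \<noteq> n \<longrightarrow> c k = 0"
  and cn: "c n = 0 \<or> m n n = (\<lambda>k. 0)"
  and form: "\<forall>x\<in>vecs n. \<forall>y\<in>vecs n. \<theta> x y = vscale (Delta1n n x y) c"
  shows "\<theta> \<in> Z2 m n"
proof -
  have cv: "c \<in> vecs n" using cs n3 unfolding vecs_def by auto
  have c1: "c 1 = 0" using cs n3 by auto
  have tv: "\<theta> x y \<in> vecs n" if "x \<in> vecs n" "y \<in> vecs n" for x y
    using form that cv by (auto simp: vecs_def vscale_def)
  have bil: "bilinear_on_vecs n \<theta>"
    unfolding bilinear_on_vecs_def
  proof (intro conjI ballI allI)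
    fix x y assume "x \<in> vecs n" "y \<in> vecs n" then show "\<theta> x y \<in> vecs n" by (rule tv)
  next
    fix a b x x' y assume h: "x \<in> vecs n" "x' \<in> vecs n" "y \<in> vecs n"
    have "vadd (vscale a x) (vscale b x') \<in> vecs n" using h vecs_lin by blast
    then have e: "\<theta> (vadd (vscale a x) (vscale b x')) y = vscale (Delta1n n (vadd (vscale a x) (vscale b x')) y) c"
      "\<theta> x y = vscale (Delta1n n x y) c" "\<theta> x' y = vscale (Delta1n n x' y) c"
      using form h by blast+
    show "\<theta> (vadd (vscale a x) (vscale b x')) y = vadd (vscale a (\<theta> x y)) (vscale b (\<theta> x' y))"
      unfolding e by (simp add: vscale_def vadd_def Delta1n_def fun_eq_iff algebra_simps)
  next
    fix a b x y y' assume h: "x \<in> vecs n" "y \<in> vecs n" "y' \<in> vecs n"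
    have "vadd (vscale a y) (vscale b y') \<in> vecs n" using h vecs_lin by blast
    then have e: "\<theta> x (vadd (vscale a y) (vscale b y')) = vscale (Delta1n n x (vadd (vscale a y) (vscale b y'))) c"
      "\<theta> x y = vscale (Delta1n n x y) c" "\<theta> x y' = vscale (Delta1n n x y') c"
      using form h by blast+
    show "\<theta> x (vadd (vscale a y) (vscale b y')) = vadd (vscale a (\<theta> x y)) (vscale b (\<theta> x y'))"
      unfolding e by (simp add: vscale_def vadd_def Delta1n_def fun_eq_iff algebra_simps)
  qed
  have skew: "\<forall>x\<in>vecs n. \<forall>y\<in>vecs n. \<theta> x y = vscale (-1) (\<theta> y x)"
  proof (intro ballI)
    fix x y assume h: "x \<in> vecs n" "y \<in> vecs n"
    then have e: "\<theta> x y = vscale (Delta1n n x y) c" "\<theta> y x = vscale (Delta1n n y x) c" using form by blast+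
    show "\<theta> x y = vscale (-1) (\<theta> y x)" unfolding e by (simp add: vscale_def Delta1n_def fun_eq_iff algebra_simps)
  qed
  have jac: "vadd (vadd (\<theta> (\<theta> x y) z) (\<theta> (\<theta> y z) x)) (\<theta> (\<theta> z x) y) = (\<lambda>k. 0)"
    if "x \<in> vecs n" "y \<in> vecs n" "z \<in> vecs n" for x y z
  proof -
    have "\<theta> (\<theta> x y) z = vscale (Delta1n n (vscale (Delta1n n x y) c) z) c"
      "\<theta> (\<theta> y z) x = vscale (Delta1n n (vscale (Delta1n n y z) c) x) c"
      "\<theta> (\<theta> z x) y = vscale (Delta1n n (vscale (Delta1n n z x) c) y) c"
      using form tv that by auto
    note e = this
    show ?thesis unfolding e using c1 by (simp add: vscale_def vadd_def Delta1n_def fun_eq_iff algebra_simps)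
  qed
  have msupp: "m i j k = 0" if "i \<in> {1..n}" "j \<in> {1..n}" "k \<notin> {2..n-1}" for i j k
    using m_supp[where m=m, OF n3 H1 H2 H3 that] .
  have am: "amult m n x y k = 0" if "k \<notin> {2..n-1}" for x y k
    unfolding amult_def using msupp[OF _ _ that] by simp
  have amv: "amult m n x y \<in> vecs n" for x y unfolding vecs_def proof (intro CollectI allI impI) fix i assume "i \<notin> {1..n}" then show "amult m n x y i = 0" by (intro am) auto qed
  have leib: "\<theta> (amult m n x y) z = vadd (amult m n (\<theta> x z) y) (amult m n x (\<theta> y z))"
    if "x \<in> vecs n" "y \<in> vecs n" "z \<in> vecs n" for x y z
  proof -
    have "Delta1n n (amult m n x y) z = 0" using am[of 1] am[of n] n3 by (simp add: Delta1n_def)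
    then have l: "\<theta> (amult m n x y) z = (\<lambda>k. 0)" using form amv that by (simp add: vscale_def)
    note sc1 = ann_scale[where m=m and n=n and c=c and a="Delta1n n x z", OF cs cn]
    note sc2 = ann_scale[where m=m and n=n and c=c and a="Delta1n n y z", OF cs cn]
    have "amult m n (\<theta> x z) y = (\<lambda>k. 0)"
      using form that amult_annL[OF ann_cond(1)[where m=m, OF n3 H2 sc1]] by simp
    moreover have "amult m n x (\<theta> y z) = (\<lambda>k. 0)"
      using form that amult_annR[OF ann_cond(2)[where m=m, OF n3 H2 sc2]] by simp
    ultimately show ?thesis using l by (simp add: vadd_def)
  qed
  show ?thesis unfolding Z2_def using bil skew jac leib by blast
qed


lemma mu11_H1: "1 \<le> i \<Longrightarrow> 1 \<le> j \<Longrightarrow> i + j \<le> n - 1 \<Longrightarrow> mu11 n i j = bvec (i+j)"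
  by (auto simp: mu11_def)
lemma mu11_H2: "(n::nat) > 3 \<Longrightarrow> i \<le> n \<Longrightarrow> j \<le> n \<Longrightarrow> n \<le> i + j \<Longrightarrow> \<not> (i = n \<and> j = n) \<Longrightarrow> mu11 n i j = (\<lambda>k. 0)"
  by (auto simp: mu11_def)
lemma mu11_H3: "(n::nat) > 3 \<Longrightarrow> mu11 n n n = (\<lambda>k. 0)"
  by (auto simp: mu11_def)
lemma mu12_H1: "1 \<le> i \<Longrightarrow> 1 \<le> j \<Longrightarrow> i + j \<le> n - 1 \<Longrightarrow> mu12 n i j = bvec (i+j)"
  by (auto simp: mu12_def)
lemma mu12_H2: "(n::nat) > 3 \<Longrightarrow> i \<le> n \<Longrightarrow> j \<le> n \<Longrightarrow> n \<le> i + j \<Longrightarrow> \<not> (i = n \<and> j = n) \<Longrightarrow> mu12 n i j = (\<lambda>k. 0)"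
  by (auto simp: mu12_def)
lemma mu12_H3: "(n::nat) > 3 \<Longrightarrow> mu12 n n n = bvec (n - 1)"
  by (auto simp: mu12_def)
lemma mu12_nz: "(n::nat) > 3 \<Longrightarrow> mu12 n n n \<noteq> (\<lambda>k. 0)"
  by (simp add: mu12_H3 bvec_def fun_eq_iff)

theorem lemma3p7:
  fixes n :: nat
  assumes "n > 3"
  shows "(\<forall>\<theta>. \<theta> \<in> Z2 (mu11 n) n \<longleftrightarrow>
            (\<exists>\<alpha> \<beta>. \<forall>x\<in>vecs n. \<forall>y\<in>vecs n.
               \<theta> x y = vadd (vscale (\<alpha> * Delta1n n x y) (bvec (n - 1)))
                             (vscale (\<beta> * Delta1n n x y) (bvec n))))
       \<and> (\<forall>\<theta>. \<theta> \<in> Z2 (mu12 n) n \<longleftrightarrow>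
            (\<exists>\<alpha>. \<forall>x\<in>vecs n. \<forall>y\<in>vecs n.
               \<theta> x y = vscale (\<alpha> * Delta1n n x y) (bvec (n - 1))))"
proof (intro conjI allI iffI)
  note n3 = assms
  have nn: "n - 1 \<noteq> n" using n3 by simp
  {
    fix \<theta> assume th: "\<theta> \<in> Z2 (mu11 n) n"
    obtain c where c: "\<forall>x\<in>vecs n. \<forall>y\<in>vecs n. \<theta> x y = vscale (Delta1n n x y) c"
      "\<forall>k. k \<noteq> n-1 \<and> k \<noteq> n \<longrightarrow> c k = 0"
      using forward[where m="mu11 n", OF n3 mu11_H1 mu11_H2[OF n3] _ th] mu11_H3[OF n3] by blast
    have "\<forall>x\<in>vecs n. \<forall>y\<in>vecs n. \<theta> x y = vadd (vscale (c (n-1) * Delta1n n x y) (bvec (n - 1)))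
                             (vscale (c n * Delta1n n x y) (bvec n))"
    proof (intro ballI ext)
      fix x y k assume h: "x \<in> vecs n" "y \<in> vecs n"
      show "\<theta> x y k = vadd (vscale (c (n-1) * Delta1n n x y) (bvec (n - 1))) (vscale (c n * Delta1n n x y) (bvec n)) k"
        using c(1) h c(2)[rule_format, of k] nn by (auto simp: vadd_def vscale_def bvec_def)
    qed
    then show "\<exists>\<alpha> \<beta>. \<forall>x\<in>vecs n. \<forall>y\<in>vecs n.
               \<theta> x y = vadd (vscale (\<alpha> * Delta1n n x y) (bvec (n - 1)))
                             (vscale (\<beta> * Delta1n n x y) (bvec n))" by blast
  }
  {
    fix \<theta> assume "\<exists>\<alpha> \<beta>. \<forall>x\<in>vecs n. \<forall>y\<in>vecs n.
               \<theta> x y = vadd (vscale (\<alpha> * Delta1n n x y) (bvec (n - 1)))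
                             (vscale (\<beta> * Delta1n n x y) (bvec n))"
    then obtain \<alpha> \<beta> where ab: "\<forall>x\<in>vecs n. \<forall>y\<in>vecs n.
               \<theta> x y = vadd (vscale (\<alpha> * Delta1n n x y) (bvec (n - 1)))
                             (vscale (\<beta> * Delta1n n x y) (bvec n))" by blast
    define c where "c = vadd (vscale \<alpha> (bvec (n-1))) (vscale \<beta> (bvec n))"
    have form: "\<forall>x\<in>vecs n. \<forall>y\<in>vecs n. \<theta> x y = vscale (Delta1n n x y) c"
      using ab by (auto simp: c_def vadd_def vscale_def fun_eq_iff algebra_simps)
    have cs: "\<forall>k. k \<noteq> n-1 \<and> k \<noteq> n \<longrightarrow> c k = 0" by (simp add: c_def vadd_def vscale_def bvec_def)
    show "\<theta> \<in> Z2 (mu11 n) n"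
      using backward[where m="mu11 n", OF n3 mu11_H1 mu11_H2[OF n3] _ cs _ form] mu11_H3[OF n3] by blast
  }
  {
    fix \<theta> assume th: "\<theta> \<in> Z2 (mu12 n) n"
    obtain c where c: "\<forall>x\<in>vecs n. \<forall>y\<in>vecs n. \<theta> x y = vscale (Delta1n n x y) c"
      "\<forall>k. k \<noteq> n-1 \<and> k \<noteq> n \<longrightarrow> c k = 0" "c n = 0 \<or> mu12 n n n = (\<lambda>k. 0)"
      using forward[where m="mu12 n", OF n3 mu12_H1 mu12_H2[OF n3] _ th] mu12_H3[OF n3] by blast
    have cn: "c n = 0" using c(3) mu12_nz[OF n3] by blast
    have "\<forall>x\<in>vecs n. \<forall>y\<in>vecs n. \<theta> x y = vscale (c (n-1) * Delta1n n x y) (bvec (n - 1))"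
    proof (intro ballI ext)
      fix x y k assume h: "x \<in> vecs n" "y \<in> vecs n"
      show "\<theta> x y k = vscale (c (n-1) * Delta1n n x y) (bvec (n - 1)) k"
        using c(1) h c(2)[rule_format, of k] cn nn by (auto simp: vscale_def bvec_def)
    qed
    then show "\<exists>\<alpha>. \<forall>x\<in>vecs n. \<forall>y\<in>vecs n. \<theta> x y = vscale (\<alpha> * Delta1n n x y) (bvec (n - 1))" by blast
  }
  {
    fix \<theta> assume "\<exists>\<alpha>. \<forall>x\<in>vecs n. \<forall>y\<in>vecs n. \<theta> x y = vscale (\<alpha> * Delta1n n x y) (bvec (n - 1))"
    then obtain \<alpha> where ab: "\<forall>x\<in>vecs n. \<forall>y\<in>vecs n. \<theta> x y = vscale (\<alpha> * Delta1n n x y) (bvec (n - 1))" by blast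
    define c where "c = vscale \<alpha> (bvec (n-1))"
    have form: "\<forall>x\<in>vecs n. \<forall>y\<in>vecs n. \<theta> x y = vscale (Delta1n n x y) c"
      using ab by (auto simp: c_def vscale_def fun_eq_iff algebra_simps)
    have cs: "\<forall>k. k \<noteq> n-1 \<and> k \<noteq> n \<longrightarrow> c k = 0" by (simp add: c_def vscale_def bvec_def)
    have cn: "c n = 0" using nn by (simp add: c_def vscale_def bvec_def)
    show "\<theta> \<in> Z2 (mu12 n) n"
      using backward[where m="mu12 n", OF n3 mu12_H1 mu12_H2[OF n3] _ cs _ form] mu12_H3[OF n3] cn by blast
  }
qed

end
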